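(* Let $q\ge 2$ be a prime, and let $\Gamma=(V,E)$ be a complete digraph on $2q-1$ vertices with weights $w(e)\in\mathbb{Z}_q$ on its edges. Then $\Gamma$ contains a directed cycle $C$ whose total weight $\sum_{e\in C} w(e)$ is $0$ in $\mathbb{Z}_q$.
   Context: A complete digraph is a digraph in which every ordered pair $(u,v)$ of distinct vertices is joined by exactly one directed edge from $u$ to $v$ (so each pair of vertices is connected by one edge in each direction). Directed cycles may have length $2$. *)

theory Defs
  imports "HOL-Computational_Algebra.Primes"
begin

text \<open>A complete digraph on a finite vertex set V has exactly one edge (u,v) for every
ordered pair of distinct vertices; so an edge-weighting is a function w on such pairs.
Weights in Z_q are represented by integers, considered modulo q.\<close>

definition directed_cycle :: "'a set \<Rightarrow> 'a list \<Rightarrow> bool" where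
  "directed_cycle V cs \<longleftrightarrow> length cs \<ge> 2 \<and> distinct cs \<and> set cs \<subseteq> V"

definition cycle_weight :: "('a \<Rightarrow> 'a \<Rightarrow> int) \<Rightarrow> 'a list \<Rightarrow> int" where
  "cycle_weight w cs = (\<Sum>i<length cs. w (cs ! i) (cs ! ((i + 1) mod length cs)))"

end

theory Submission
  imports Defs "HOL-Number_Theory.Cong"
begin

definition pw :: "('a \<Rightarrow> 'a \<Rightarrow> int) \<Rightarrow> 'a list \<Rightarrow> int" where
  "pw w l = (\<Sum>i<length l - 1. w (l ! i) (l ! Suc i))"

lemma pw_single: "pw w [x] = 0"
  by (simp add: pw_def)

lemma pw_snoc:
  assumes "l \<noteq> []"
  shows "pw w (l @ [x]) = pw w l + w (last l) x"
proof -
  obtain k where k: "length l = Suc k" using assms by (cases l) auto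
  have "pw w (l @ [x]) = (\<Sum>i<Suc k. w ((l@[x]) ! i) ((l@[x]) ! Suc i))"
    by (simp add: pw_def k)
  also have "\<dots> = (\<Sum>i<k. w ((l@[x]) ! i) ((l@[x]) ! Suc i)) + w (l ! k) x"
    using k by (simp add: nth_append)
  also have "(\<Sum>i<k. w ((l@[x]) ! i) ((l@[x]) ! Suc i)) = pw w l"
    unfolding pw_def using k by (intro sum.cong) (auto simp: nth_append)
  also have "l ! k = last l" using k assms by (simp add: last_conv_nth)
  finally show ?thesis .
qed

lemma cycle_weight_pw:
  assumes "l \<noteq> []"
  shows "cycle_weight w l = pw w l + w (last l) (hd l)"
proof -
  obtain k where k: "length l = Suc k" using assms by (cases l) auto
  have "cycle_weight w l = (\<Sum>i<Suc k. w (l ! i) (l ! ((i + 1) mod Suc k)))"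
    by (simp add: cycle_weight_def k)
  also have "\<dots> = (\<Sum>i<k. w (l ! i) (l ! ((i + 1) mod Suc k))) + w (l ! k) (l ! 0)"
    by simp
  also have "(\<Sum>i<k. w (l ! i) (l ! ((i + 1) mod Suc k))) = pw w l"
    unfolding pw_def using k by (intro sum.cong) auto
  also have "l ! k = last l" using k assms by (simp add: last_conv_nth)
  also have "l ! 0 = hd l" using assms by (simp add: hd_conv_nth)
  finally show ?thesis .
qed

lemma grow:
  fixes q :: nat and R :: "int set" and d1 d2 :: int
  assumes q: "prime q" and R: "R \<subseteq> {0..<int q}" "R \<noteq> {}" and d: "\<not> int q dvd (d1 - d2)"
  shows "min q (card R + 1) \<le> card ((\<lambda>r. (r+d1) mod int q) ` R \<union> (\<lambda>r. (r+d2) mod int q) ` R)"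
proof -
  let ?f1 = "\<lambda>r. (r+d1) mod int q"
  let ?f2 = "\<lambda>r. (r+d2) mod int q"
  have q0: "int q > 0" using q prime_gt_0_nat by auto
  have inj: "inj_on (\<lambda>r. (r+d) mod int q) {0..<int q}" for d
    by (rule inj_onI) (metis add.right_neutral add_diff_eq atLeastLessThan_iff
       cancel_comm_monoid_add_class.diff_cancel mod_diff_left_eq mod_pos_pos_trivial)
  have c1: "card (?f1 ` R) = card R" by (rule card_image[OF inj_on_subset[OF inj R(1)]])
  have fin: "finite R" using R(1) finite_subset by blast
  have cR: "card R \<le> q" using card_mono[OF _ R(1)] by simp
  show ?thesis
  proof (rule ccontr)
    assume "\<not> ?thesis"
    hence lt: "card (?f1`R \<union> ?f2`R) < min q (card R + 1)" by (simp only: not_le)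
    have ge: "card (?f1`R) \<le> card (?f1`R \<union> ?f2`R)" using fin by (intro card_mono) auto
    have cRq: "card R < q" using lt ge c1 by linarith
    have "?f1`R = ?f1`R \<union> ?f2`R"
    proof (rule card_subset_eq)
      show "finite (?f1`R \<union> ?f2`R)" using fin by simp
      show "?f1`R \<subseteq> ?f1`R \<union> ?f2`R" by blast
      show "card (?f1`R) = card (?f1`R \<union> ?f2`R)" using ge lt c1 by linarith
    qed
    hence sub: "?f2 ` R \<subseteq> ?f1 ` R" by blast
    have clos: "(r + (d2 - d1)) mod int q \<in> R" if "r \<in> R" for r
    proof -
      have "?f2 r \<in> ?f1 ` R" using sub that by (rule subsetD[OF _ imageI])
      then obtain s where s: "s \<in> R" "(r+d2) mod int q = (s+d1) mod int q" by (rule imageE) simp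
      have e1: "r + (d2 - d1) = (r + d2) - d1" by simp
      have "(r + (d2 - d1)) mod int q = ((r+d2) mod int q - d1) mod int q"
        unfolding e1 by (rule mod_diff_left_eq[symmetric])
      also have "\<dots> = ((s+d1) mod int q - d1) mod int q" using s by simp
      also have "\<dots> = ((s+d1) - d1) mod int q" by (rule mod_diff_left_eq)
      also have "\<dots> = s mod int q" by simp
      also have "\<dots> = s" using s R(1) by auto
      finally show ?thesis using s by simp
    qed
    have iter: "(r + int k * (d2 - d1)) mod int q \<in> R" if "r \<in> R" for r k
    proof (induction k)
      case 0 then show ?case using that R(1) by auto
    next
      case (Suc k)
      have e2: "r + int (Suc k) * (d2 - d1) = (r + int k * (d2 - d1)) + (d2 - d1)"
        by (simp add: distrib_right)
      have "(r + int (Suc k) * (d2 - d1)) mod int q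
            = ((r + int k * (d2 - d1)) mod int q + (d2 - d1)) mod int q"
        unfolding e2 by (rule mod_add_left_eq[symmetric])
      then show ?case using clos[OF Suc] by simp
    qed
    obtain r0 where r0: "r0 \<in> R" using R(2) by blast
    have "prime (int q)" using q by (simp add: prime_nat_int_transfer)
    moreover have "\<not> int q dvd (d2 - d1)" using d by (metis dvd_diff_commute)
    ultimately have "coprime (int q) (d2 - d1)" by (rule prime_imp_coprime)
    hence "coprime (d2 - d1) (int q)" by (simp add: coprime_commute)
    then obtain u where u: "[(d2 - d1) * u = 1] (mod int q)" using cong_solve_coprime_int by blast
    have "{0..<int q} \<subseteq> R"
    proof
      fix c assume c: "c \<in> {0..<int q}"
      define k where "k = nat ((u * (c - r0)) mod int q)"
      have ik: "int k = (u * (c - r0)) mod int q" unfolding k_def using q0 by simp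
      have "[int k = u * (c - r0)] (mod int q)" unfolding ik cong_def by simp
      hence "[int k * (d2 - d1) = u * (c - r0) * (d2 - d1)] (mod int q)"
        by (rule cong_mult) (rule cong_refl)
      moreover have "u * (c - r0) * (d2 - d1) = (c - r0) * ((d2 - d1) * u)" by algebra
      moreover have "[(c - r0) * ((d2 - d1) * u) = (c - r0) * 1] (mod int q)"
        by (rule cong_mult[OF cong_refl u])
      ultimately have "[int k * (d2 - d1) = c - r0] (mod int q)"
        by (metis cong_trans mult_1_right)
      hence "[r0 + int k * (d2 - d1) = r0 + (c - r0)] (mod int q)"
        by (rule cong_add[OF cong_refl])
      hence "(r0 + int k * (d2 - d1)) mod int q = c mod int q" unfolding cong_def by simp
      also have "\<dots> = c" using c by auto
      finally show "c \<in> R" using iter[OF r0, of k] by simp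
    qed
    hence "card {0..<int q} \<le> card R" using fin by (intro card_mono) auto
    thus False using cRq by simp
  qed
qed

lemma paths:
  fixes w :: "'a \<Rightarrow> 'a \<Rightarrow> int" and q :: nat
  assumes q: "prime q" and s: "s \<in> V"
   and H2a: "\<forall>x\<in>V. \<forall>y\<in>V. x \<noteq> y \<longrightarrow> \<not> int q dvd (w x y + w y x)"
  shows "W \<subseteq> V - {s} \<Longrightarrow> finite W \<Longrightarrow> 2*m \<le> card W \<Longrightarrow> \<exists>t L. finite L \<and> L \<noteq> {}
     \<and> (\<forall>l\<in>L. distinct l \<and> l \<noteq> [] \<and> hd l = s \<and> last l = t \<and> set l \<subseteq> insert s W)
     \<and> (m > 0 \<longrightarrow> t \<in> W) \<and> min q (m+1) \<le> card ((\<lambda>l. pw w l mod int q) ` L)"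
proof (induction m arbitrary: W)
  have H2: "\<not> int q dvd (w x y + w y x)" if "x \<in> V" "y \<in> V" "x \<noteq> y" for x y
    using H2a that by blast
  case 0
  show ?case
    by (rule exI[of _ s], rule exI[of _ "{[s]}"]) (simp add: pw_single)
next
  case (Suc m)
  have H2: "\<not> int q dvd (w x y + w y x)" if "x \<in> V" "y \<in> V" "x \<noteq> y" for x y
    using H2a that by blast
  have q0: "int q > 0" using q prime_gt_0_nat by auto
  have "card W \<noteq> 0" using Suc.prems(3) by (simp del: card_0_eq)
  then obtain x where x: "x \<in> W" by fastforce
  have "card (W - {x}) \<noteq> 0" using Suc.prems x by simp
  hence "W - {x} \<noteq> {}" by (metis card.empty)
  then obtain y where "y \<in> W - {x}" by blast
  hence y: "y \<in> W" "y \<noteq> x" by auto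
  define W' where "W' = W - {x,y}"
  have cW': "card W' = card W - 2" unfolding W'_def using x y Suc.prems(2)
    by (subst card_Diff_subset) auto
  have "W' \<subseteq> V - {s}" "finite W'" "2*m \<le> card W'"
    using Suc.prems cW' unfolding W'_def by auto
  from Suc.IH[OF this] obtain t L where L: "finite L" "L \<noteq> {}"
     "\<forall>l\<in>L. distinct l \<and> l \<noteq> [] \<and> hd l = s \<and> last l = t \<and> set l \<subseteq> insert s W'"
     "min q (m+1) \<le> card ((\<lambda>l. pw w l mod int q) ` L)" by blast
  have xV: "x \<in> V" "y \<in> V" "x \<noteq> s" "y \<noteq> s" using x y Suc.prems(1) by auto
  have "\<exists>a b. {a,b} = {x,y} \<and> a \<noteq> b \<and> \<not> int q dvd (w t a + w a b - w t b)"
  proof (cases "int q dvd (w t x + w x y - w t y)")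
    case True
    have "\<not> int q dvd (w t y + w y x - w t x)"
    proof
      assume "int q dvd (w t y + w y x - w t x)"
      with True have "int q dvd ((w t x + w x y - w t y) + (w t y + w y x - w t x))" by (rule dvd_add)
      hence "int q dvd (w x y + w y x)" by (simp add: algebra_simps)
      thus False using H2[OF xV(1,2)] y by auto
    qed
    thus ?thesis using y by blast
  next
    case False
    thus ?thesis using y by blast
  qed
  then obtain a b where ab: "{a,b} = {x,y}" "a \<noteq> b" "\<not> int q dvd (w t a + w a b - w t b)" by blast
  have abW: "a \<in> W" "b \<in> W" "a \<notin> insert s W'" "b \<notin> insert s W'"
    using ab(1) x y xV unfolding W'_def by auto
  define L' where "L' = (\<lambda>l. l@[a,b]) ` L \<union> (\<lambda>l. l@[b]) ` L"
  define R where "R = (\<lambda>l. pw w l mod int q) ` L"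
  have img: "(\<lambda>l. pw w l mod int q) ` L' =
     (\<lambda>r. (r + (w t a + w a b)) mod int q) ` R \<union> (\<lambda>r. (r + w t b) mod int q) ` R"
  proof -
    have e1: "pw w (l@[a,b]) mod int q = (pw w l mod int q + (w t a + w a b)) mod int q" if "l \<in> L" for l
    proof -
      have "l@[a,b] = (l@[a])@[b]" by simp
      hence "pw w (l@[a,b]) = pw w l + w t a + w a b"
        using pw_snoc[of l w a] pw_snoc[of "l@[a]" w b] L(3) that by auto
      thus ?thesis by (simp add: mod_add_left_eq add.assoc)
    qed
    have e2: "pw w (l@[b]) mod int q = (pw w l mod int q + w t b) mod int q" if "l \<in> L" for l
    proof -
      have "pw w (l@[b]) = pw w l + w t b"
        using pw_snoc[of l w b] L(3) that by auto
      thus ?thesis by (simp add: mod_add_left_eq)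
    qed
    show ?thesis unfolding L'_def R_def image_Un image_image
      using e1 e2 by (intro arg_cong2[where f="(\<union>)"] image_cong) auto
  qed
  have Rsub: "R \<subseteq> {0..<int q}" unfolding R_def using q0 by auto
  have Rne: "R \<noteq> {}" unfolding R_def using L(2) by auto
  have d: "\<not> int q dvd ((w t a + w a b) - w t b)" using ab(3) by (simp add: algebra_simps)
  have g: "min q (card R + 1) \<le> card ((\<lambda>l. pw w l mod int q) ` L')"
    unfolding img by (rule grow[OF q Rsub Rne d])
  have cR: "min q (m+1) \<le> card R" using L(4) unfolding R_def .
  show ?case
  proof (intro exI[of _ b] exI[of _ L'] conjI)
    show "finite L'" unfolding L'_def using L(1) by simp
    show "L' \<noteq> {}" unfolding L'_def using L(2) by simp
    show "Suc m > 0 \<longrightarrow> b \<in> W" using abW by simp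
    show "min q (Suc m + 1) \<le> card ((\<lambda>l. pw w l mod int q) ` L')" using g cR by linarith
    show "\<forall>l\<in>L'. distinct l \<and> l \<noteq> [] \<and> hd l = s \<and> last l = b \<and> set l \<subseteq> insert s W"
    proof
      fix l' assume "l' \<in> L'"
      then obtain l where l: "l \<in> L" "l' = l@[a,b] \<or> l' = l@[b]" unfolding L'_def by blast
      have "distinct l" "l \<noteq> []" "hd l = s" "set l \<subseteq> insert s W'" using L(3) l(1) by auto
      moreover have "W' \<subseteq> W" unfolding W'_def by auto
      ultimately show "distinct l' \<and> l' \<noteq> [] \<and> hd l' = s \<and> last l' = b \<and> set l' \<subseteq> insert s W"
        using l(2) abW ab(2) by auto
    qed
  qed
qed

theorem lemma5:
  fixes V :: "'a set" and w :: "'a \<Rightarrow> 'a \<Rightarrow> int" and q :: nat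
  assumes "prime q" and "finite V" and "card V = 2 * q - 1"
  shows "\<exists>cs. directed_cycle V cs \<and> int q dvd cycle_weight w cs"
proof (rule ccontr)
  assume nz: "\<not> ?thesis"
  have q2: "q \<ge> 2" using assms(1) prime_ge_2_nat by blast
  have q0: "int q > 0" using q2 by simp
  have H2: "\<not> int q dvd (w x y + w y x)" if "x \<in> V" "y \<in> V" "x \<noteq> y" for x y
  proof -
    have "directed_cycle V [x,y]" using that by (simp add: directed_cycle_def)
    moreover have "cycle_weight w [x,y] = w x y + w y x"
      by (simp add: cycle_weight_pw pw_def)
    ultimately show ?thesis using nz by metis
  qed
  have "V \<noteq> {}" using assms(3) q2 by auto
  then obtain s where s: "s \<in> V" by blast
  define W where "W = V - {s}"
  have cW: "card W = 2 * (q - 1)" unfolding W_def using assms(2,3) s q2 by simp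
  have Wf: "W \<subseteq> V - {s}" "finite W" "2*(q-1) \<le> card W" using assms(2) cW unfolding W_def by auto
  have H2a: "\<forall>x\<in>V. \<forall>y\<in>V. x \<noteq> y \<longrightarrow> \<not> int q dvd (w x y + w y x)"
    using H2 by blast
  note ex = paths[where m="q - 1" and w=w and V=V, OF assms(1) s H2a Wf]
  then obtain t L where L0: "finite L \<and> L \<noteq> {}
     \<and> (\<forall>l\<in>L. distinct l \<and> l \<noteq> [] \<and> hd l = s \<and> last l = t \<and> set l \<subseteq> insert s W)
     \<and> (q - 1 > 0 \<longrightarrow> t \<in> W) \<and> min q (q-1+1) \<le> card ((\<lambda>l. pw w l mod int q) ` L)"
    by (elim exE)
  have L: "finite L" "\<forall>l\<in>L. distinct l \<and> l \<noteq> [] \<and> hd l = s \<and> last l = t \<and> set l \<subseteq> insert s W"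
     "t \<in> W" "min q (q-1+1) \<le> card ((\<lambda>l. pw w l mod int q) ` L)"
    using L0 q2 by auto
  define R where "R = (\<lambda>l. pw w l mod int q) ` L"
  have Rsub: "R \<subseteq> {0..<int q}" unfolding R_def using q0 by auto
  have "card {0..<int q} \<le> card R" using L(4) q2 unfolding R_def by simp
  hence "R = {0..<int q}" using Rsub by (intro card_seteq) auto
  moreover have "(- w t s) mod int q \<in> {0..<int q}" using q0 by auto
  ultimately have "(- w t s) mod int q \<in> (\<lambda>l. pw w l mod int q) ` L"
    unfolding R_def by simp
  then obtain l where l2: "(- w t s) mod int q = pw w l mod int q" and l1: "l \<in> L"
    by (rule imageE)
  have l: "l \<in> L" "pw w l mod int q = (- w t s) mod int q" using l1 l2 by simp_all
  have lp: "distinct l" "l \<noteq> []" "hd l = s" "last l = t" "set l \<subseteq> insert s W"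
    using L(2) l(1) by auto
  have ts: "t \<noteq> s" using L(3) unfolding W_def by auto
  have "length l \<ge> 2"
  proof (cases l)
    case Nil then show ?thesis using lp by simp
  next
    case (Cons z zs)
    then show ?thesis using lp ts by (cases zs) auto
  qed
  hence dc: "directed_cycle V l" using lp s unfolding directed_cycle_def W_def by auto
  have "int q dvd (pw w l - (- w t s))" using l(2) by (simp add: mod_eq_dvd_iff)
  hence "int q dvd cycle_weight w l" using cycle_weight_pw[OF lp(2), of w] lp by simp
  thus False using nz dc by blast
qed

end
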